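(* Let $M=p_1^{n_1}\cdots p_K^{n_K}$ with distinct primes and $n_\nu\in\mathbb{N}$, let $A\oplus B=\mathbb{Z}_M$, and fix $i$. Assume $0\in B$, and that $a_0\neq a_1\in A$ satisfy $p_i^{n_i}\mid a_0-a_1$. Assume further that $a_\mu*F_i$ splits with parity $(B,A)$ for $\mu=0,1$. Then $\Sigma_A(a_0*F_i)$ and $\Sigma_A(a_1*F_i)$ are disjoint.
   Context: $A\oplus B=\mathbb{Z}_M$ means every element of $\mathbb{Z}_M$ is uniquely $a+b$ with $a\in A$, $b\in B$. $F_i=\{0,M/p_i,\dots,(p_i-1)M/p_i\}$, $x*F_i=\{x+f:f\in F_i\}$. For $Z\subset\mathbb{Z}_M$, $\Sigma_A(Z)=\{a\in A: a+b\in Z\text{ for some }b\in B\}$, $\Sigma_B(Z)=\{b\in B: a+b\in Z\text{ for some }a\in A\}$. A fiber $Z=x*F_i$ splits with parity $(B,A)$ if $p_i^{n_i}\mid b-b'$ for all $b,b'\in\Sigma_B(Z)$ and, for all distinct $a,a'\in\Sigma_A(Z)$, $p_i^{n_i-1}\mid a-a'$ but $p_i^{n_i}\nmid a-a'$. *)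

theory Defs
  imports "HOL-Computational_Algebra.Primes"
begin

text \<open>Z_M is modelled by the residues {0..<M} (naturals), addition mod M.\<close>

definition is_tiling :: "nat \<Rightarrow> nat set \<Rightarrow> nat set \<Rightarrow> bool" where
  "is_tiling M A B \<longleftrightarrow> A \<subseteq> {0..<M} \<and> B \<subseteq> {0..<M} \<and>
     (\<forall>x<M. \<exists>!ab. fst ab \<in> A \<and> snd ab \<in> B \<and> (fst ab + snd ab) mod M = x)"

text \<open>The fiber x * F_i = {x + f : f in F_i}, F_i = {0, M/p, ..., (p-1)M/p}.\<close>
definition fiber :: "nat \<Rightarrow> nat \<Rightarrow> nat \<Rightarrow> nat set" where
  "fiber M p x = {(x + k * (M div p)) mod M | k. k < p}"

definition SigmaA :: "nat \<Rightarrow> nat set \<Rightarrow> nat set \<Rightarrow> nat set \<Rightarrow> nat set" where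
  "SigmaA M A B Z = {a \<in> A. \<exists>b\<in>B. (a + b) mod M \<in> Z}"

definition SigmaB :: "nat \<Rightarrow> nat set \<Rightarrow> nat set \<Rightarrow> nat set \<Rightarrow> nat set" where
  "SigmaB M A B Z = {b \<in> B. \<exists>a\<in>A. (a + b) mod M \<in> Z}"

definition splits_BA :: "nat \<Rightarrow> nat set \<Rightarrow> nat set \<Rightarrow> nat \<Rightarrow> nat \<Rightarrow> nat set \<Rightarrow> bool" where
  "splits_BA M A B p n Z \<longleftrightarrow>
     (\<forall>b\<in>SigmaB M A B Z. \<forall>b'\<in>SigmaB M A B Z. int (p ^ n) dvd int b - int b') \<and>
     (\<forall>a\<in>SigmaA M A B Z. \<forall>a'\<in>SigmaA M A B Z. a \<noteq> a' \<longrightarrow>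
        int (p ^ (n - 1)) dvd int a - int a' \<and> \<not> int (p ^ n) dvd int a - int a')"

end

theory Submission
  imports Defs
begin

theorem lemma4p7:
  fixes M K i :: nat and p n :: "nat \<Rightarrow> nat" and A B :: "nat set" and a0 a1 :: nat
  assumes primes: "\<forall>\<nu>\<in>{1..K}. prime (p \<nu>)"
    and distinct: "inj_on p {1..K}"
    and exps: "\<forall>\<nu>\<in>{1..K}. n \<nu> \<ge> 1"
    and M_def: "M = (\<Prod>\<nu>\<in>{1..K}. p \<nu> ^ n \<nu>)"
    and i: "i \<in> {1..K}"
    and tiling: "is_tiling M A B"
    and zeroB: "0 \<in> B"
    and a0: "a0 \<in> A" and a1: "a1 \<in> A" and ne: "a0 \<noteq> a1"
    and dvd01: "int (p i ^ n i) dvd int a0 - int a1"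
    and split0: "splits_BA M A B (p i) (n i) (fiber M (p i) a0)"
    and split1: "splits_BA M A B (p i) (n i) (fiber M (p i) a1)"
  shows "SigmaA M A B (fiber M (p i) a0) \<inter> SigmaA M A B (fiber M (p i) a1) = {}"
proof (rule ccontr)
  define P where "P = p i"
  define N where "N = n i"
  define Q where "Q = (\<Prod>\<nu>\<in>{1..K}-{i}. p \<nu> ^ n \<nu>)"
  define D where "D = P ^ (N - 1) * Q"
  have Pp: "prime P" using primes i P_def by auto
  have N1: "N \<ge> 1" using exps i N_def by auto
  have MPQ: "M = P ^ N * Q"
    unfolding M_def Q_def P_def N_def
    using prod.remove[of "{1..K}" i "\<lambda>\<nu>. p \<nu> ^ n \<nu>"] i by auto
  have cop: "coprime P Q"
    unfolding Q_def
  proof (rule prod_coprime_right)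
    fix j assume j: "j \<in> {1..K} - {i}"
    then have "p j \<noteq> P" using distinct i P_def inj_on_def by (metis DiffE singletonI)
    moreover have "prime (p j)" using j primes by auto
    ultimately have "coprime P (p j)" using Pp primes_coprime by blast
    then show "coprime P (p j ^ n j)" by simp
  qed
  have Qpos: "Q > 0" unfolding Q_def using primes prime_gt_0_nat by (intro prod_pos) auto
  have Mpos: "M > 0" using MPQ Qpos Pp prime_gt_0_nat by simp
  have PD: "P * D = M" unfolding D_def MPQ using N1
    by (metis mult.assoc power_eq_if not_one_le_zero)
  have MdivP: "M div P = D" using PD Pp prime_gt_0_nat by (metis nonzero_mult_div_cancel_left not_prime_0)
  have A_sub: "A \<subseteq> {0..<M}" and B_sub: "B \<subseteq> {0..<M}" using tiling is_tiling_def by auto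
  have uniq: "\<And>x y u v. x \<in> A \<Longrightarrow> y \<in> A \<Longrightarrow> u \<in> B \<Longrightarrow> v \<in> B \<Longrightarrow>
      (x + u) mod M = (y + v) mod M \<Longrightarrow> x = y"
  proof -
    fix x y u v assume xyuv: "x \<in> A" "y \<in> A" "u \<in> B" "v \<in> B" "(x + u) mod M = (y + v) mod M"
    have "(x + u) mod M < M" using Mpos by simp
    then have "\<exists>!ab. fst ab \<in> A \<and> snd ab \<in> B \<and> (fst ab + snd ab) mod M = (x + u) mod M"
      using tiling unfolding is_tiling_def by (elim conjE allE impE)
    then obtain ab where hab: "\<And>ab'. fst ab' \<in> A \<and> snd ab' \<in> B \<and> (fst ab' + snd ab') mod M = (x + u) mod M \<Longrightarrow> ab' = ab"
      by (elim ex1E) blast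
    have "(x, u) = ab" using hab[of "(x,u)"] xyuv by simp
    moreover have "(y, v) = ab" using hab[of "(y,v)"] xyuv by simp
    ultimately have "(x, u) = (y, v)" by simp
    then show "x = y" by simp
  qed
  assume "SigmaA M A B (fiber M (p i) a0) \<inter> SigmaA M A B (fiber M (p i) a1) \<noteq> {}"
  then obtain a where
    s0: "a \<in> SigmaA M A B (fiber M P a0)" and s1: "a \<in> SigmaA M A B (fiber M P a1)"
    using P_def by auto
  have aA: "a \<in> A" using s0 SigmaA_def by auto
  obtain b k where bB: "b \<in> B" and kP: "k < P" and
      eq0: "(a + b) mod M = (a0 + k * D) mod M"
    using s0 unfolding SigmaA_def fiber_def MdivP by auto
  obtain b' k' where bB': "b' \<in> B" and kP': "k' < P" and
      eq1: "(a + b') mod M = (a1 + k' * D) mod M"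
    using s1 unfolding SigmaA_def fiber_def MdivP by auto
  have a0M: "a0 < M" and a1M: "a1 < M" using a0 a1 A_sub by auto
  have z0: "0 \<in> SigmaB M A B (fiber M P a0)"
    unfolding SigmaB_def fiber_def using zeroB a0 a0M Pp prime_gt_0_nat
    by (auto intro!: bexI[of _ a0] exI[of _ 0])
  have z1: "0 \<in> SigmaB M A B (fiber M P a1)"
    unfolding SigmaB_def fiber_def using zeroB a1 a1M Pp prime_gt_0_nat
    by (auto intro!: bexI[of _ a1] exI[of _ 0])
  have b0: "b \<in> SigmaB M A B (fiber M P a0)"
    unfolding SigmaB_def fiber_def MdivP using bB aA eq0 kP by (auto intro!: bexI[of _ a])
  have b1: "b' \<in> SigmaB M A B (fiber M P a1)"
    unfolding SigmaB_def fiber_def MdivP using bB' aA eq1 kP' by (auto intro!: bexI[of _ a])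
  have db: "int (P ^ N) dvd int b" using split0 z0 b0 unfolding splits_BA_def P_def N_def by force
  have db': "int (P ^ N) dvd int b'" using split1 z1 b1 unfolding splits_BA_def P_def N_def by force
  have e0: "int M dvd (int a + int b) - (int a0 + int k * int D)"
    using eq0 by (metis mod_eq_dvd_iff of_nat_add of_nat_mult of_nat_mod)
  have e1: "int M dvd (int a + int b') - (int a1 + int k' * int D)"
    using eq1 by (metis mod_eq_dvd_iff of_nat_add of_nat_mult of_nat_mod)
  have PNM: "int (P ^ N) dvd int M" using MPQ by simp
  have "int (P ^ N) dvd ((int a + int b) - (int a0 + int k * int D)) - ((int a + int b') - (int a1 + int k' * int D)) - int b + int b' + (int a0 - int a1)"
  proof -
    have h0: "int (P ^ N) dvd (int a + int b) - (int a0 + int k * int D)" using e0 PNM by (rule dvd_trans[rotated])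
    have h1: "int (P ^ N) dvd (int a + int b') - (int a1 + int k' * int D)" using e1 PNM by (rule dvd_trans[rotated])
    have h2: "int (P ^ N) dvd int a0 - int a1" using dvd01 P_def N_def by simp
    show ?thesis by (intro dvd_add dvd_diff h0 h1 h2 db db')
  qed
  moreover have "((int a + int b) - (int a0 + int k * int D)) - ((int a + int b') - (int a1 + int k' * int D)) - int b + int b' + (int a0 - int a1) = - ((int k - int k') * int D)"
    by (simp add: algebra_simps)
  ultimately have "int (P ^ N) dvd (int k - int k') * int D" by simp
  moreover have "int (P ^ N) = int (P ^ (N-1)) * int P" using N1
    by (cases N) (auto simp: algebra_simps)
  moreover have "(int k - int k') * int D = int (P ^ (N-1)) * ((int k - int k') * int Q)"
    unfolding D_def by (simp add: algebra_simps)
  ultimately have "int (P ^ (N-1)) * int P dvd int (P ^ (N-1)) * ((int k - int k') * int Q)" by metis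
  moreover have "int (P ^ (N-1)) \<noteq> 0" using Pp prime_gt_0_nat by simp
  ultimately have "int P dvd (int k - int k') * int Q"
    using dvd_times_left_cancel_iff by blast
  moreover have "coprime (int P) (int Q)" using cop by simp
  ultimately have dv: "int P dvd int k - int k'" using coprime_dvd_mult_left_iff by blast
  have kk: "k = k'"
  proof (rule ccontr)
    assume nk: "k \<noteq> k'"
    have "int k - int k' \<noteq> 0" using nk by simp
    then have "\<bar>int P\<bar> \<le> \<bar>int k - int k'\<bar>" using dv by (rule dvd_imp_le_int)
    then show False using kP kP' by linarith
  qed
  have "int M dvd ((int a + int b) - (int a0 + int k * int D)) - ((int a + int b') - (int a1 + int k' * int D))"
    using e0 e1 by (rule dvd_diff)
  also have "((int a + int b) - (int a0 + int k * int D)) - ((int a + int b') - (int a1 + int k' * int D)) = int (a1 + b) - int (a0 + b')"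
    using kk by simp
  finally have "(a1 + b) mod M = (a0 + b') mod M"
    by (metis mod_eq_dvd_iff of_nat_eq_iff of_nat_mod)
  then have "a1 = a0" using uniq a0 a1 bB bB' by blast
  then show False using ne by simp
qed

end
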